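(* Let $R$ be a ring with identity and $a,b,c,p,q\in R$, and suppose there exist $p',q'\in R$ with $q'qc=c$ and $bpp'=b$. The following are equivalent: (i) $paq$ is $(b,c)$-invertible; (ii) $pa$ is right $(qb,qc)$-invertible and $aq$ is left $(bp,cp)$-invertible. Moreover, if $y$ is the $(b,c)$-inverse of $paq$, $x$ is any right $(qb,qc)$-inverse of $pa$ and $z$ is any left $(bp,cp)$-inverse of $aq$, then $y=zax$.
   Context: For $x\in R$: $xR=\{xr:r\in R\}$, $Rx=\{rx:r\in R\}$. For $\alpha,b,c\in R$: $y$ is a left $(b,c)$-inverse of $\alpha$ if $Ry\subseteq Rc$ and $y\alpha b=b$; a right $(b,c)$-inverse if $yR\subseteq bR$ and $c\alpha y=c$; $\alpha$ is left/right $(b,c)$-invertible if such $y$ exists. $\alpha$ is $(b,c)$-invertible if there is $y\in R$ with $y\in (bRy)\cap(yRc)$, $y\alpha b=b$ and $c\alpha y=c$; such $y$ is unique and called the $(b,c)$-inverse of $\alpha$. *)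

theory Defs
  imports Main
begin

definition left_mult_set :: "'a::ring_1 \<Rightarrow> 'a set" where
  "left_mult_set x = {r * x | r. True}"

definition right_mult_set :: "'a::ring_1 \<Rightarrow> 'a set" where
  "right_mult_set x = {x * r | r. True}"

definition left_bc_inverse :: "'a::ring_1 \<Rightarrow> 'a \<Rightarrow> 'a \<Rightarrow> 'a \<Rightarrow> bool" where
  "left_bc_inverse y a b c \<longleftrightarrow> left_mult_set y \<subseteq> left_mult_set c \<and> y * a * b = b"

definition right_bc_inverse :: "'a::ring_1 \<Rightarrow> 'a \<Rightarrow> 'a \<Rightarrow> 'a \<Rightarrow> bool" where
  "right_bc_inverse y a b c \<longleftrightarrow> right_mult_set y \<subseteq> right_mult_set b \<and> c * a * y = c"

definition left_bc_invertible :: "'a::ring_1 \<Rightarrow> 'a \<Rightarrow> 'a \<Rightarrow> bool" where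
  "left_bc_invertible a b c \<longleftrightarrow> (\<exists>y. left_bc_inverse y a b c)"

definition right_bc_invertible :: "'a::ring_1 \<Rightarrow> 'a \<Rightarrow> 'a \<Rightarrow> bool" where
  "right_bc_invertible a b c \<longleftrightarrow> (\<exists>y. right_bc_inverse y a b c)"

definition bc_inverse :: "'a::ring_1 \<Rightarrow> 'a \<Rightarrow> 'a \<Rightarrow> 'a \<Rightarrow> bool" where
  "bc_inverse y a b c \<longleftrightarrow>
     y \<in> {b * r * y | r. True} \<inter> {y * r * c | r. True} \<and> y * a * b = b \<and> c * a * y = c"

definition bc_invertible :: "'a::ring_1 \<Rightarrow> 'a \<Rightarrow> 'a \<Rightarrow> bool" where
  "bc_invertible a b c \<longleftrightarrow> (\<exists>y. bc_inverse y a b c)"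

end

theory Submission
  imports Defs
begin

lemma lms: "left_mult_set y \<subseteq> left_mult_set (c::'a::ring_1) \<longleftrightarrow> (\<exists>t. y = t*c)"
proof
  assume "left_mult_set y \<subseteq> left_mult_set c"
  moreover have "y \<in> left_mult_set y" unfolding left_mult_set_def by (metis (mono_tags) mem_Collect_eq mult_1_left)
  ultimately show "\<exists>t. y = t*c" unfolding left_mult_set_def by blast
next
  assume "\<exists>t. y = t*c"
  then obtain t where "y = t*c" by blast
  then show "left_mult_set y \<subseteq> left_mult_set c" unfolding left_mult_set_def
    by (auto simp: mult.assoc[symmetric])
qed

lemma rms: "right_mult_set y \<subseteq> right_mult_set (b::'a::ring_1) \<longleftrightarrow> (\<exists>s. y = b*s)"
proof
  assume "right_mult_set y \<subseteq> right_mult_set b"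
  moreover have "y \<in> right_mult_set y" unfolding right_mult_set_def by (metis (mono_tags) mem_Collect_eq mult_1_right)
  ultimately show "\<exists>s. y = b*s" unfolding right_mult_set_def by blast
next
  assume "\<exists>s. y = b*s"
  then obtain s where "y = b*s" by blast
  then show "right_mult_set y \<subseteq> right_mult_set b" unfolding right_mult_set_def
    by (auto simp: mult.assoc)
qed

lemma bc_inv_iff: "bc_inverse y (\<alpha>::'a::ring_1) b c \<longleftrightarrow>
   (\<exists>s. y = b*s) \<and> (\<exists>t. y = t*c) \<and> y*\<alpha>*b = b \<and> c*\<alpha>*y = c"
proof
  assume "bc_inverse y \<alpha> b c"
  then show "(\<exists>s. y = b*s) \<and> (\<exists>t. y = t*c) \<and> y*\<alpha>*b = b \<and> c*\<alpha>*y = c"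
    unfolding bc_inverse_def by (auto simp: mult.assoc) (metis mult.assoc)
next
  assume A: "(\<exists>s. y = b*s) \<and> (\<exists>t. y = t*c) \<and> y*\<alpha>*b = b \<and> c*\<alpha>*y = c"
  then obtain s t where s: "y = b*s" and t: "y = t*c" and h1: "y*\<alpha>*b = b" and h2: "c*\<alpha>*y = c" by blast
  have yy: "y = y*\<alpha>*y" using t h2 by (metis mult.assoc)
  have "y = b*(s*\<alpha>)*y" using yy s by (simp add: mult.assoc)
  moreover have "y = y*(\<alpha>*t)*c" using yy t by (simp add: mult.assoc)
  ultimately show "bc_inverse y \<alpha> b c" unfolding bc_inverse_def using h1 h2 by blast
qed

lemma bc_unique:
  assumes "bc_inverse y (\<alpha>::'a::ring_1) b c" "bc_inverse y' \<alpha> b c"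
  shows "y = y'"
proof -
  obtain t where t: "y = t*c" and h1: "y*\<alpha>*b = b" using assms(1) bc_inv_iff by metis
  obtain s where s: "y' = b*s" and h2: "c*\<alpha>*y' = c" using assms(2) bc_inv_iff by metis
  have "y = t*(c*\<alpha>*y')" using t h2 by simp
  also have "\<dots> = y*\<alpha>*b*s" using t s by (simp add: mult.assoc)
  also have "\<dots> = y'" using h1 s by simp
  finally show ?thesis .
qed

lemma constr:
  fixes a b c p q :: "'a::ring_1"
  assumes q': "q' * q * c = c" and p': "b * p * p' = b"
    and x: "right_bc_inverse x (p * a) (q * b) (q * c)"
    and z: "left_bc_inverse z (a * q) (b * p) (c * p)"
  shows "bc_inverse (z*a*x) (p*a*q) b c"
proof -
  obtain s where s: "x = q*b*s" and hx: "q*c*(p*a)*x = q*c" using x unfolding right_bc_inverse_def rms by (metis mult.assoc)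
  obtain t where t: "z = t*(c*p)" and hz: "z*(a*q)*(b*p) = b*p" using z unfolding left_bc_inverse_def lms by blast
  have cx: "c*p*a*x = c"
  proof -
    have "c*p*a*x = q'*(q*c*(p*a)*x)" using q' by (metis mult.assoc)
    also have "\<dots> = c" using hx q' by (simp add: mult.assoc)
    finally show ?thesis .
  qed
  have zb: "z*a*q*b = b"
  proof -
    have "z*a*q*b = z*(a*q)*(b*p)*p'" using p' by (simp add: mult.assoc)
    also have "\<dots> = b" using hz p' by simp
    finally show ?thesis .
  qed
  have y1: "z*a*x = b*s" using s zb by (metis mult.assoc)
  have y2: "z*a*x = t*c" using t cx by (metis mult.assoc)
  have e1: "z*a*x*(p*a*q)*b = b"
  proof -
    have "z*a*x*(p*a*q)*b = t*(c*p*a*x)*p*a*q*b" using t by (simp add: mult.assoc)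
    also have "\<dots> = t*c*p*a*q*b" using cx by simp
    also have "\<dots> = z*a*q*b" using t by (simp add: mult.assoc)
    finally show ?thesis using zb by simp
  qed
  have e2: "c*(p*a*q)*(z*a*x) = c"
  proof -
    have "q*(z*a*x) = q*(z*a*q*b)*s" using s by (simp add: mult.assoc)
    also have "\<dots> = x" using zb s by (simp add: mult.assoc)
    finally have "q*(z*a*x) = x" .
    then have "c*(p*a*q)*(z*a*x) = c*p*a*x" by (metis mult.assoc)
    then show ?thesis using cx by simp
  qed
  show ?thesis unfolding bc_inv_iff using y1 y2 e1 e2 by blast
qed

theorem theorem3p6:
  fixes a b c p q :: "'a::ring_1"
  assumes "\<exists>p' q'. q' * q * c = c \<and> b * p * p' = b"
  shows "(bc_invertible (p * a * q) b c \<longleftrightarrow>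
            right_bc_invertible (p * a) (q * b) (q * c) \<and> left_bc_invertible (a * q) (b * p) (c * p))
         \<and> (\<forall>y x z. bc_inverse y (p * a * q) b c \<and> right_bc_inverse x (p * a) (q * b) (q * c)
                     \<and> left_bc_inverse z (a * q) (b * p) (c * p) \<longrightarrow> y = z * a * x)"
proof -
  obtain p' q' where q': "q' * q * c = c" and p': "b * p * p' = b" using assms by blast
  have fw: "right_bc_invertible (p * a) (q * b) (q * c) \<and> left_bc_invertible (a * q) (b * p) (c * p)"
    if H: "bc_invertible (p * a * q) b c"
  proof -
    obtain y where y: "bc_inverse y (p*a*q) b c" using H unfolding bc_invertible_def by blast
    obtain s t where s: "y = b*s" and t: "y = t*c" and h1: "y*(p*a*q)*b = b" and h2: "c*(p*a*q)*y = c"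
      using y bc_inv_iff by metis
    have "right_bc_inverse (q*y) (p * a) (q * b) (q * c)"
      unfolding right_bc_inverse_def rms using s h2
      by (metis mult.assoc)
    moreover have "left_bc_inverse (y*p) (a * q) (b * p) (c * p)"
      unfolding left_bc_inverse_def lms using t h1
      by (metis mult.assoc)
    ultimately show ?thesis unfolding right_bc_invertible_def left_bc_invertible_def by blast
  qed
  have bw: "bc_invertible (p * a * q) b c"
    if "right_bc_invertible (p * a) (q * b) (q * c) \<and> left_bc_invertible (a * q) (b * p) (c * p)"
    using that constr[OF q' p'] unfolding right_bc_invertible_def left_bc_invertible_def bc_invertible_def
    by blast
  show ?thesis using fw bw constr[OF q' p'] bc_unique by blast
qed

end
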